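(* Let $s \geq 3$ and let $\mathcal{C} = \mathcal{C}_0 \cup \mathcal{C}_1 \cup \cdots \cup \mathcal{C}_{s-2}$ be an $(s-1)$-tiling of $Q_n$. Let $C \in \mathcal{C}_\ell$ be a level $\ell$ cube of codimension $d$. Then for each $\rho \in \{1, \ldots, \ell\}$ and each $\ell' \in \{1, \ldots, s-2\}$, the number of cubes $C' \in \mathcal{C}_{\ell'}$ of codimension at most $d$ which are $\rho$-adjacent to $C$ is at most $d_\rho(C)$.
   Context: $Q_n$ is the hypercube on $\{0,1\}^n$. Subcubes are represented by vectors in $\{0,1,*\}^n$; a special cube is one of the form $(a_1,\dots,a_d,*,\dots,* )$, with codimension $d(C)=d$. Two disjoint cubes are adjacent if they contain vertices adjacent in $Q_n$. A tiling of $Q_n$ is a collection of pairwise disjoint special cubes covering $\{0,1\}^n$. An $(s-1)$-tiling is a sequence of tilings $\mathcal{C}_0, \mathcal{C}_1, \ldots, \mathcal{C}_{s-2}$ where $\mathcal{C}_0 = \{Q_n\}$ and, for $\ell \geq 1$, every cube of $\mathcal{C}_\ell$ is contained in some cube of $\mathcal{C}_{\ell-1}$; cubes of $\mathcal{C}_\ell$ are called level $\ell$ cubes. For a level $\ell$ cube $C$ and $0 \le i \le \ell$, let $C^{(i)}$ be the unique level $i$ cube containing $C$ (so $C^{(0)}=Q_n$, $C^{(\ell)}=C$); the $i$-codimension of $C$ is $d_i(C) = d(C^{(i)}) - d(C^{(i-1)})$ for $1 \leq i \leq \ell$, so $d(C)=\sum_{i\le \ell} d_i(C)$. For two adjacent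 cubes $C, C'$ of the $(s-1)$-tiling, their level of adjacency $\rho(C,C')$ is the minimum $i$ such that the level $i$ cubes containing $C$ and $C'$ are distinct; $C$ and $C'$ are called $\rho$-adjacent if $\rho(C,C')=\rho$. *)

theory Defs
  imports Main
begin

text \<open>Vertices of Q_n are boolean lists of length n. A special cube
(a_1,...,a_d,*,...,*) is represented by its prefix, a boolean list of length d \<le> n;
its codimension is the length of the list.\<close>

definition cube_verts :: "nat \<Rightarrow> bool list \<Rightarrow> bool list set" where
  "cube_verts n a = {x. length x = n \<and> take (length a) x = a}"

definition codim :: "bool list \<Rightarrow> nat" where
  "codim a = length a"

definition hypercube_adj :: "nat \<Rightarrow> bool list \<Rightarrow> bool list \<Rightarrow> bool" where
  "hypercube_adj n x y \<longleftrightarrow> length x = n \<and> length y = n \<and>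
     card {i. i < n \<and> x ! i \<noteq> y ! i} = 1"

definition cubes_adjacent :: "nat \<Rightarrow> bool list \<Rightarrow> bool list \<Rightarrow> bool" where
  "cubes_adjacent n a b \<longleftrightarrow> cube_verts n a \<inter> cube_verts n b = {} \<and>
     (\<exists>x\<in>cube_verts n a. \<exists>y\<in>cube_verts n b. hypercube_adj n x y)"

definition is_tiling :: "nat \<Rightarrow> bool list set \<Rightarrow> bool" where
  "is_tiling n T \<longleftrightarrow> (\<forall>a\<in>T. length a \<le> n) \<and>
     (\<forall>a\<in>T. \<forall>b\<in>T. a \<noteq> b \<longrightarrow> cube_verts n a \<inter> cube_verts n b = {}) \<and>
     (\<Union>a\<in>T. cube_verts n a) = {x. length x = n}"

text \<open>An (s-1)-tiling: tilings Cs 0, ..., Cs (s-2) with Cs 0 = {Q_n}, refining.\<close>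
definition is_multi_tiling :: "nat \<Rightarrow> nat \<Rightarrow> (nat \<Rightarrow> bool list set) \<Rightarrow> bool" where
  "is_multi_tiling n s Cs \<longleftrightarrow> Cs 0 = {[]} \<and>
     (\<forall>l\<le>s-2. is_tiling n (Cs l)) \<and>
     (\<forall>l. 1 \<le> l \<and> l \<le> s-2 \<longrightarrow>
        (\<forall>c\<in>Cs l. \<exists>c'\<in>Cs (l-1). cube_verts n c \<subseteq> cube_verts n c'))"

definition anc :: "nat \<Rightarrow> (nat \<Rightarrow> bool list set) \<Rightarrow> nat \<Rightarrow> bool list \<Rightarrow> bool list" where
  "anc n Cs i c = (THE a. a \<in> Cs i \<and> cube_verts n c \<subseteq> cube_verts n a)"

definition icodim :: "nat \<Rightarrow> (nat \<Rightarrow> bool list set) \<Rightarrow> nat \<Rightarrow> bool list \<Rightarrow> nat" where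
  "icodim n Cs i c = codim (anc n Cs i c) - codim (anc n Cs (i - 1) c)"

definition adj_level :: "nat \<Rightarrow> (nat \<Rightarrow> bool list set) \<Rightarrow> nat \<Rightarrow> bool list \<Rightarrow> nat \<Rightarrow> bool list \<Rightarrow> nat" where
  "adj_level n Cs l c l' c' = (LEAST i. i \<le> min l l' \<and> anc n Cs i c \<noteq> anc n Cs i c')"

definition rho_adjacent :: "nat \<Rightarrow> (nat \<Rightarrow> bool list set) \<Rightarrow> nat \<Rightarrow> bool list \<Rightarrow> nat \<Rightarrow> bool list \<Rightarrow> nat \<Rightarrow> bool" where
  "rho_adjacent n Cs l c l' c' \<rho> \<longleftrightarrow> cubes_adjacent n c c' \<and> adj_level n Cs l c l' c' = \<rho>"

end

theory Submission
  imports Defs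
begin

lemma verts_ne: "length a \<le> n \<Longrightarrow> a @ replicate (n - length a) b \<in> cube_verts n a"
  by (simp add: cube_verts_def)

lemma verts_nth: "x \<in> cube_verts n a \<Longrightarrow> i < length a \<Longrightarrow> x ! i = a ! i"
  unfolding cube_verts_def by (metis (mono_tags, lifting) mem_Collect_eq nth_take)

lemma verts_len: "x \<in> cube_verts n a \<Longrightarrow> length a \<le> n"
proof -
  assume "x \<in> cube_verts n a"
  then have "length x = n" "take (length a) x = a" unfolding cube_verts_def by auto
  moreover have "length (take (length a) x) \<le> length x" by simp
  ultimately show ?thesis by metis
qed

lemma verts_sub:
  assumes "length a \<le> n" "cube_verts n a \<subseteq> cube_verts n b"
  shows "length b \<le> length a \<and> (\<forall>i<length b. a!i = b!i)"
proof -
  have x: "a @ replicate (n - length a) False \<in> cube_verts n b"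
   and y: "a @ replicate (n - length a) True \<in> cube_verts n b"
    using assms verts_ne by blast+
  have lb: "length b \<le> n" using x verts_len by blast
  have 1: "length b \<le> length a"
  proof (rule ccontr)
    assume "\<not> ?thesis"
    then have "length a < length b" by simp
    then have "(a @ replicate (n - length a) False) ! length a = b ! length a"
         "(a @ replicate (n - length a) True) ! length a = b ! length a"
      using verts_nth x y by blast+
    moreover have "length a < n" using \<open>length a < length b\<close> lb by simp
    ultimately show False by (simp add: nth_append)
  qed
  moreover have "\<forall>i<length b. a!i = b!i"
  proof (intro allI impI)
    fix i assume "i < length b"
    then have "(a @ replicate (n - length a) False) ! i = b ! i" using verts_nth x by blast
    thus "a!i = b!i" using 1 \<open>i < length b\<close> by (simp add: nth_append)
  qed
  ultimately show ?thesis by blast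
qed

lemma verts_int:
  assumes "length a \<le> n" "length b \<le> n"
  shows "cube_verts n a \<inter> cube_verts n b \<noteq> {} \<longleftrightarrow> (\<forall>i<min (length a) (length b). a!i = b!i)"
proof
  assume "cube_verts n a \<inter> cube_verts n b \<noteq> {}"
  then obtain x where "x \<in> cube_verts n a" "x \<in> cube_verts n b" by blast
  then show "\<forall>i<min (length a) (length b). a!i = b!i" using verts_nth
    by (metis min_less_iff_conj)
next
  assume h: "\<forall>i<min (length a) (length b). a!i = b!i"
  show "cube_verts n a \<inter> cube_verts n b \<noteq> {}"
  proof (cases "length b \<le> length a")
    case True
    let ?x = "a @ replicate (n - length a) False"
    have "take (length b) ?x = b"
      using True h by (intro nth_equalityI) (auto simp: nth_append)
    then have "?x \<in> cube_verts n b" using assms by (simp add: cube_verts_def)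
    then show ?thesis using verts_ne[OF assms(1)] by blast
  next
    case False
    let ?x = "b @ replicate (n - length b) False"
    have "take (length a) ?x = a"
      using False h by (intro nth_equalityI) (auto simp: nth_append)
    then have "?x \<in> cube_verts n a" using assms by (simp add: cube_verts_def)
    then show ?thesis using verts_ne[OF assms(2)] by blast
  qed
qed

lemma tiling_len: "is_tiling n T \<Longrightarrow> a \<in> T \<Longrightarrow> length a \<le> n"
  by (simp add: is_tiling_def)

lemma tiling_eq: "is_tiling n T \<Longrightarrow> a \<in> T \<Longrightarrow> b \<in> T \<Longrightarrow>
   cube_verts n a \<inter> cube_verts n b \<noteq> {} \<Longrightarrow> a = b"
  unfolding is_tiling_def by blast

lemma mt_tiling: "is_multi_tiling n s Cs \<Longrightarrow> i \<le> s - 2 \<Longrightarrow> is_tiling n (Cs i)"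
  unfolding is_multi_tiling_def by simp

lemma mt_refine: "is_multi_tiling n s Cs \<Longrightarrow> 1 \<le> l \<Longrightarrow> l \<le> s - 2 \<Longrightarrow> c \<in> Cs l \<Longrightarrow>
   \<exists>c'\<in>Cs (l - 1). cube_verts n c \<subseteq> cube_verts n c'"
  unfolding is_multi_tiling_def by simp

lemma anc_ex:
  assumes "is_multi_tiling n s Cs" "l \<le> s - 2" "C \<in> Cs l" "k \<le> l"
  shows "\<exists>a\<in>Cs (l - k). cube_verts n C \<subseteq> cube_verts n a"
  using assms(4)
proof (induction k)
  case 0
  then show ?case using assms(3) by auto
next
  case (Suc k)
  then have "k \<le> l" by simp
  then obtain a where a: "a \<in> Cs (l - k)" "cube_verts n C \<subseteq> cube_verts n a" using Suc.IH by blast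
  have h: "1 \<le> l - k" "l - k \<le> s - 2" using Suc.prems assms(2) by simp_all
  obtain a' where a': "a' \<in> Cs (l - k - 1)" "cube_verts n a \<subseteq> cube_verts n a'"
    using mt_refine[OF assms(1) h a(1)] by blast
  have "l - k - 1 = l - Suc k" by simp
  then have "a' \<in> Cs (l - Suc k)" using a'(1) by simp
  moreover have "cube_verts n C \<subseteq> cube_verts n a'" using a(2) a'(2) by (rule subset_trans)
  ultimately show ?case by blast
qed

lemma anc_props:
  assumes "is_multi_tiling n s Cs" "l \<le> s - 2" "C \<in> Cs l" "i \<le> l"
  shows "anc n Cs i C \<in> Cs i \<and> cube_verts n C \<subseteq> cube_verts n (anc n Cs i C)"
proof -
  have T: "is_tiling n (Cs i)" using mt_tiling[OF assms(1)] assms(2,4) by simp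
  have TL: "is_tiling n (Cs l)" using mt_tiling[OF assms(1,2)] .
  have "length C \<le> n" using tiling_len[OF TL assms(3)] .
  then have ne: "cube_verts n C \<noteq> {}" using verts_ne by blast
  have "l - (l - i) = i" using assms(4) by simp
  then obtain a where a: "a \<in> Cs i" "cube_verts n C \<subseteq> cube_verts n a"
    using anc_ex[OF assms(1-3), of "l - i"] by auto
  have uq: "b = a" if b: "b \<in> Cs i \<and> cube_verts n C \<subseteq> cube_verts n b" for b
  proof -
    have "cube_verts n b \<inter> cube_verts n a \<noteq> {}" using b a(2) ne by blast
    then show ?thesis using tiling_eq[OF T] b a(1) by blast
  qed
  have "anc n Cs i C = a" unfolding anc_def
    by (rule the_equality) (use a uq in blast)+
  then show ?thesis using a by simp
qed

lemma anc_self: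
  assumes "is_multi_tiling n s Cs" "l \<le> s - 2" "C \<in> Cs l"
  shows "anc n Cs l C = C"
proof -
  have TL: "is_tiling n (Cs l)" using mt_tiling[OF assms(1,2)] .
  have "length C \<le> n" using tiling_len[OF TL assms(3)] .
  then have ne: "cube_verts n C \<noteq> {}" using verts_ne by blast
  have an: "anc n Cs l C \<in> Cs l" "cube_verts n C \<subseteq> cube_verts n (anc n Cs l C)"
    using anc_props[OF assms order.refl] by simp_all
  have "cube_verts n (anc n Cs l C) \<inter> cube_verts n C \<noteq> {}" using an(2) ne by blast
  then show ?thesis using tiling_eq[OF TL an(1) assms(3)] by blast
qed

lemma anc_prefix:
  assumes "is_multi_tiling n s Cs" "l \<le> s - 2" "C \<in> Cs l" "i \<le> l"
  shows "length (anc n Cs i C) \<le> length C \<and> (\<forall>k<length (anc n Cs i C). C!k = anc n Cs i C ! k)"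
proof -
  have TL: "is_tiling n (Cs l)" using assms unfolding is_multi_tiling_def by auto
  have "length C \<le> n" using tiling_len[OF TL assms(3)] .
  then show ?thesis using verts_sub anc_props[OF assms] by blast
qed

theorem proposition4p4:
  fixes n s l l' \<rho> :: nat and Cs :: "nat \<Rightarrow> bool list set" and C :: "bool list"
  assumes "s \<ge> 3"
    and "is_multi_tiling n s Cs"
    and "l \<le> s - 2" and "C \<in> Cs l"
    and "1 \<le> \<rho>" and "\<rho> \<le> l"
    and "1 \<le> l'" and "l' \<le> s - 2"
  shows "card {C' \<in> Cs l'. codim C' \<le> codim C \<and> rho_adjacent n Cs l C l' C' \<rho>}
           \<le> icodim n Cs \<rho> C"
proof -
  note MT = assms(2)
  have T: "\<And>i. i \<le> s - 2 \<Longrightarrow> is_tiling n (Cs i)" using mt_tiling[OF MT] by blast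
  have lenC: "length C \<le> n" using tiling_len[OF T[OF assms(3)] assms(4)] .
  define S where "S = {C' \<in> Cs l'. codim C' \<le> codim C \<and> rho_adjacent n Cs l C l' C' \<rho>}"
  define A where "A = anc n Cs \<rho> C"
  define P where "P = anc n Cs (\<rho> - 1) C"
  have A: "A \<in> Cs \<rho>" "length A \<le> length C" "\<forall>k<length A. C!k = A!k"
    using anc_props[OF MT assms(3,4,6)] anc_prefix[OF MT assms(3,4,6)] unfolding A_def by auto
  have P: "length P \<le> length C" "\<forall>k<length P. C!k = P!k"
    using anc_prefix[OF MT assms(3,4), of "\<rho> - 1"] assms(6) unfolding P_def by auto
  define D where "D c' = {i. i < length c' \<and> C!i \<noteq> c'!i}" for c'
  have key: "\<exists>j. D c' = {j} \<and> length P \<le> j \<and> j < length A" if c': "c' \<in> S" for c'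
  proof -
    have c0: "c' \<in> Cs l'" "codim c' \<le> codim C" "rho_adjacent n Cs l C l' c' \<rho>"
      using c' unfolding S_def by simp_all
    have c'l: "c' \<in> Cs l'" "length c' \<le> length C" "cubes_adjacent n C c'"
      "adj_level n Cs l C l' c' = \<rho>"
      using c0 unfolding rho_adjacent_def codim_def by simp_all
    have lenc': "length c' \<le> n" using tiling_len[OF T[OF assms(8)] c'l(1)] .
    have disj: "cube_verts n C \<inter> cube_verts n c' = {}" using c'l(3) unfolding cubes_adjacent_def by blast
    then have "\<not> (\<forall>i<min (length C) (length c'). C!i = c'!i)"
      using verts_int[OF lenC lenc'] by blast
    then obtain j where j0: "j < min (length C) (length c')" "C!j \<noteq> c'!j" by blast
    then have j: "j < length c'" "C!j \<noteq> c'!j" by simp_all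
    then have jD: "j \<in> D c'" unfolding D_def by simp
    obtain x y where xy: "x \<in> cube_verts n C" "y \<in> cube_verts n c'" "hypercube_adj n x y"
      using c'l(3) unfolding cubes_adjacent_def by blast
    have sub: "D c' \<subseteq> {i. i < n \<and> x ! i \<noteq> y ! i}"
    proof
      fix i assume "i \<in> D c'"
      then have "i < length c'" "C!i \<noteq> c'!i" unfolding D_def by auto
      moreover have "x!i = C!i" using verts_nth[OF xy(1)] c'l(2) \<open>i < length c'\<close> by simp
      moreover have "y!i = c'!i" using verts_nth[OF xy(2)] \<open>i < length c'\<close> by simp
      moreover have "i < n" using lenc' \<open>i < length c'\<close> by simp
      ultimately show "i \<in> {i. i < n \<and> x ! i \<noteq> y ! i}" by simp
    qed
    have "card (D c') \<le> card {i. i < n \<and> x ! i \<noteq> y ! i}"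
      by (rule card_mono[OF _ sub]) simp
    moreover have "card {i. i < n \<and> x ! i \<noteq> y ! i} = 1"
      using xy(3) unfolding hypercube_adj_def by simp
    ultimately have "card (D c') \<le> 1" by simp
    moreover have "finite (D c')" unfolding D_def by simp
    ultimately have "\<forall>a\<in>D c'. \<forall>b\<in>D c'. a = b" using card_le_Suc0_iff_eq by (metis One_nat_def)
    then have Dj: "D c' = {j}" using jD by blast
    let ?m = "min l l'"
    have ex: "?m \<le> min l l' \<and> anc n Cs ?m C \<noteq> anc n Cs ?m c'"
    proof (rule conjI[OF order.refl], rule notI)
      assume eq: "anc n Cs ?m C = anc n Cs ?m c'"
      have nC: "cube_verts n C \<noteq> {}" using verts_ne[OF lenC] by blast
      have nc': "cube_verts n c' \<noteq> {}" using verts_ne[OF lenc'] by blast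
      show False
      proof (cases "l \<le> l'")
        case True
        then have "anc n Cs l c' = C" using eq anc_self[OF MT assms(3,4)] by (simp add: min_def)
        then have "cube_verts n c' \<subseteq> cube_verts n C"
          using anc_props[OF MT assms(8) c'l(1) True] by simp
        then show False using disj nc' by blast
      next
        case False
        then have "anc n Cs l' C = c'" using eq anc_self[OF MT assms(8) c'l(1)] by (simp add: min_def)
        then have "cube_verts n C \<subseteq> cube_verts n c'"
          using anc_props[OF MT assms(3,4), of l'] False by simp
        then show False using disj nC by blast
      qed
    qed
    have L: "\<rho> \<le> min l l' \<and> anc n Cs \<rho> C \<noteq> anc n Cs \<rho> c'"
      using LeastI[of "\<lambda>i. i \<le> min l l' \<and> anc n Cs i C \<noteq> anc n Cs i c'", OF ex] c'l(4)
      unfolding adj_level_def by simp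
    have "\<not> (\<rho> - 1 \<le> min l l' \<and> anc n Cs (\<rho> - 1) C \<noteq> anc n Cs (\<rho> - 1) c')"
      using not_less_Least[of "\<rho> - 1" "\<lambda>i. i \<le> min l l' \<and> anc n Cs i C \<noteq> anc n Cs i c'"]
        c'l(4) assms(5) unfolding adj_level_def by simp
    then have PQ: "anc n Cs (\<rho> - 1) c' = P" using L unfolding P_def by auto
    have l'r: "\<rho> \<le> l'" "\<rho> - 1 \<le> l'" using L by auto
    have Q: "length P \<le> length c'" "\<forall>k<length P. c'!k = P!k"
      using anc_prefix[OF MT assms(8) c'l(1) l'r(2)] PQ by auto
    define B where "B = anc n Cs \<rho> c'"
    have B: "B \<in> Cs \<rho>" "length B \<le> length c'" "\<forall>k<length B. c'!k = B!k"
      using anc_props[OF MT assms(8) c'l(1) l'r(1)] anc_prefix[OF MT assms(8) c'l(1) l'r(1)]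
      unfolding B_def by auto
    have "A \<noteq> B" using L unfolding A_def B_def by simp
    have Tr: "is_tiling n (Cs \<rho>)" using T assms(3,6) by simp
    have "cube_verts n A \<inter> cube_verts n B = {}"
      using tiling_eq[OF Tr A(1) B(1)] \<open>A \<noteq> B\<close> by blast
    then obtain i where i: "i < length A" "i < length B" "A!i \<noteq> B!i"
      using verts_int[of A n B] A(2) B(2) lenC lenc' by auto
    then have "i \<in> D c'" unfolding D_def using A(3) B(2,3) by auto
    then have "i = j" using Dj by auto
    then have "j < length A" using i by simp
    moreover have "length P \<le> j"
    proof (rule ccontr)
      assume "\<not> ?thesis"
      then have "j < length P" by simp
      then have "C!j = P!j" "c'!j = P!j" using P(2) Q(2) by blast+
      then show False using j(2) by simp
    qed
    ultimately show ?thesis using Dj by blast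
  qed
  define f where "f c' = the_elem (D c')" for c'
  have fD: "D c' = {f c'}" "length P \<le> f c'" "f c' < length A" if cS: "c' \<in> S" for c'
  proof -
    obtain j where "D c' = {j}" "length P \<le> j" "j < length A" using key[OF cS] by blast
    moreover then have "f c' = j" unfolding f_def by simp
    ultimately show "D c' = {f c'}" "length P \<le> f c'" "f c' < length A" by simp_all
  qed
  have inj: "inj_on f S"
  proof
    fix c1 c2 assume c: "c1 \<in> S" "c2 \<in> S" "f c1 = f c2"
    have c1: "c1 \<in> Cs l'" and c2: "c2 \<in> Cs l'" using c unfolding S_def by auto
    have l1: "length c1 \<le> n" and l2: "length c2 \<le> n"
      using tiling_len[OF T[OF assms(8)]] c1 c2 by auto
    have "\<forall>i<min (length c1) (length c2). c1!i = c2!i"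
    proof (intro allI impI)
      fix i assume i: "i < min (length c1) (length c2)"
      show "c1!i = c2!i"
      proof (cases "i \<in> D c1")
        case True
        then have "i = f c2" using fD(1)[OF c(1)] c(3) by auto
        then have "i \<in> D c2" using fD(1)[OF c(2)] by auto
        then show ?thesis using True unfolding D_def by auto
      next
        case False
        have "i \<notin> D c2"
        proof
          assume "i \<in> D c2"
          then have "i = f c1" using fD(1)[OF c(2)] c(3) by simp
          then show False using False fD(1)[OF c(1)] by simp
        qed
        then show ?thesis using False i unfolding D_def by auto
      qed
    qed
    then have "cube_verts n c1 \<inter> cube_verts n c2 \<noteq> {}" using verts_int[OF l1 l2] by blast
    then show "c1 = c2" using tiling_eq[OF T[OF assms(8)] c1 c2] by blast
  qed
  have "card S \<le> card {length P..<length A}"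
  proof (rule card_inj_on_le[OF inj])
    show "f ` S \<subseteq> {length P..<length A}" using fD(2,3) by auto
  qed simp
  also have "\<dots> = icodim n Cs \<rho> C" unfolding icodim_def codim_def A_def P_def by simp
  finally show ?thesis unfolding S_def .
qed

end
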